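(* Let $g:\mathbb{R}\to\mathbb{R}$ be even and $\pi$-periodic. Let $m,n$ be positive integers, $p=\gcd(m,n)$, $r=n/p$, $\mu=\pi/n$, and $h(x)=\prod_{j=0}^{r-1} g(x+jm\mu)$. For $l\in\{0,\dots,p-1\}$ let $\lambda_l(x)=\prod_{k=1}^{p-l} h\big(x+(k-1)\mu\big)$ and $\delta_l=(p-l-1)\mu$. Then for all $x\in\mathbb{R}$, $$\lambda_l(x-\delta_l)=h\big(x-(p-l-1)\mu\big)\,h\big(x-(p-l-2)\mu\big)\cdots h(x)\quad\text{and}\quad\lambda_l(x-\delta_l)=\lambda_l(-x).$$ *)

theory Defs
  imports "HOL-Analysis.Analysis"
begin

end

theory Submission
  imports Defs
begin

lemma per_nat:
  fixes g :: "real \<Rightarrow> real"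
  assumes periodic: "\<And>y. g (y + pi) = g y"
  shows "g (y + real k * pi) = g y"
proof (induction k arbitrary: y)
  case 0 then show ?case by simp
next
  case (Suc k)
  have "g (y + real (Suc k) * pi) = g ((y + real k * pi) + pi)" by (simp add: algebra_simps)
  also have "\<dots> = g y" using periodic Suc by simp
  finally show ?case .
qed

lemma prod_cyc:
  fixes f :: "nat \<Rightarrow> real"
  assumes "f r = f 0"
  shows "(\<Prod>j<r. f (Suc j)) = (\<Prod>j<r. f j)"
proof (cases r)
  case 0 then show ?thesis by simp
next
  case (Suc s)
  have a: "(\<Prod>j<Suc r. f j) = f 0 * (\<Prod>j<r. f (Suc j))"
    by (rule prod.lessThan_Suc_shift)
  have b: "(\<Prod>j<Suc r. f j) = (\<Prod>j<r. f j) * f r"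
    by simp
  show ?thesis
  proof (cases "f 0 = 0")
    case True
    have z1: "(\<Prod>j<r. f j) = 0" using True Suc by (metis lessThan_iff zero_less_Suc prod_zero_iff finite_lessThan)
    have z2: "(\<Prod>j<r. f (Suc j)) = 0" using True assms Suc
      by (metis lessI prod_zero_iff finite_lessThan lessThan_iff)
    show ?thesis by (simp only: z1 z2)
  next
    case False
    then show ?thesis using a b assms by (simp add: mult.commute)
  qed
qed

theorem corollaryA6:
  fixes g :: "real \<Rightarrow> real" and m n l :: nat and x :: real
  assumes even: "\<And>y. g (- y) = g y"
    and periodic: "\<And>y. g (y + pi) = g y"
    and m_pos: "m > 0" and n_pos: "n > 0"
    and l_range: "l < gcd m n"
  shows "let p = gcd m n; r = n div p; \<mu> = pi / real n;
             h = (\<lambda>y. \<Prod>j<r. g (y + real j * real m * \<mu>));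
             lam = (\<lambda>y. \<Prod>k\<in>{1..p - l}. h (y + (real k - 1) * \<mu>));
             \<delta> = (real p - real l - 1) * \<mu>
         in lam (x - \<delta>) = (\<Prod>i<p - l. h (x - real i * \<mu>))
            \<and> lam (x - \<delta>) = lam (- x)"
proof -
  define p where "p = gcd m n"
  define r where "r = n div p"
  define \<mu> where "\<mu> = pi / real n"
  define h where "h = (\<lambda>y. \<Prod>j<r. g (y + real j * real m * \<mu>))"
  define lam where "lam = (\<lambda>y. \<Prod>k\<in>{1..p - l}. h (y + (real k - 1) * \<mu>))"
  define q where "q = p - l"
  have q1: "q \<ge> 1" using l_range unfolding q_def p_def by simp
  have dl: "(real p - real l - 1) * \<mu> = (real q - 1) * \<mu>"
    using l_range unfolding q_def p_def by (simp add: of_nat_diff)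
  have pn: "p dvd n" "p dvd m" "p > 0" unfolding p_def using n_pos by auto
  have rp: "real r * real p = real n" unfolding r_def using pn
    by (metis dvd_div_mult_self of_nat_mult)
  define c where "c = real m * \<mu>"
  have rc: "real r * c = real (m div p) * pi"
  proof -
    have "real m = real (m div p) * real p" using pn
      by (metis dvd_div_mult_self of_nat_mult)
    then show ?thesis unfolding c_def \<mu>_def using rp n_pos pn
      by (simp add: field_simps)
  qed
  have heven: "h (- y) = h y" for y
  proof -
    define f where "f j = g (y + real j * c)" for j
    have "h (- y) = (\<Prod>j<r. g (y - real j * c))"
      unfolding h_def c_def by (rule prod.cong, simp, metis even minus_diff_eq uminus_add_conv_diff mult.assoc)
    also have "\<dots> = (\<Prod>j<r. f (r - j))"
    proof (rule prod.cong)
      fix j assume "j \<in> {..<r}"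
      then have "real (r - j) = real r - real j" by simp
      then have "y + real (r - j) * c = (y - real j * c) + real (m div p) * pi"
        using rc by (simp add: algebra_simps)
      then show "g (y - real j * c) = f (r - j)" unfolding f_def
        using per_nat[of g, OF periodic] by metis
    qed simp
    also have "\<dots> = (\<Prod>j<r. f (Suc j))"
      by (rule prod.reindex_bij_witness[where i="\<lambda>j. r - 1 - j" and j="\<lambda>j. r - 1 - j"]) (auto simp: Suc_diff_Suc)
    also have "\<dots> = (\<Prod>j<r. f j)"
      by (rule prod_cyc) (simp add: f_def rc per_nat[of g, OF periodic])
    finally show ?thesis unfolding f_def h_def c_def by (simp add: mult.assoc)
  qed
  have e1: "lam (x - (real q - 1) * \<mu>) = (\<Prod>i<q. h (x - real i * \<mu>))"
    unfolding lam_def q_def[symmetric]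
    by (rule prod.reindex_bij_witness[where i="\<lambda>i. q - i" and j="\<lambda>k. q - k"])
       (use q1 in \<open>auto simp: of_nat_diff algebra_simps\<close>)
  have e2: "lam (- x) = (\<Prod>i<q. h (x - real i * \<mu>))"
  proof -
    have "lam (- x) = (\<Prod>i<q. h (- x + real i * \<mu>))"
      unfolding lam_def q_def[symmetric]
      by (rule prod.reindex_bij_witness[where i="\<lambda>i. i + 1" and j="\<lambda>k. k - 1"])
         (auto simp: of_nat_diff algebra_simps)
    also have "\<dots> = (\<Prod>i<q. h (x - real i * \<mu>))"
      by (rule prod.cong, simp, metis heven minus_diff_eq uminus_add_conv_diff)
    finally show ?thesis .
  qed
  show ?thesis
    unfolding Let_def p_def[symmetric] r_def[symmetric] \<mu>_def[symmetric] h_def[symmetric]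
      lam_def[symmetric] dl unfolding q_def[symmetric]
    using e1 e2 unfolding lam_def h_def q_def by (simp only:)
qed

end
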